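(* Let $p>5$ be a prime, $q=p^h$, and let $\mathcal{F}$ be the projective closure of $ax^n+by^m=1$ over $\mathbb{F}_q$, with $a,b\in\mathbb{F}_q^*$ and $m,n$ positive integers, $n\ge m>2$, $p\nmid mn$. Assume $\mathcal{F}$ is classical with respect to lines and nonclassical with respect to conics. For $P=(u:v:1)\in\mathcal{F}$ with $uv\ne0$, the osculating conic $\mathcal{H}_P$ to $\mathcal{F}$ at $P$ is the irreducible conic $H_P(X,Y,Z)=0$, where $H_P=au^{n-2}X^2+bv^{m-2}Y^2-Z^2$ if $p\mid(m-2)$ and $p\mid(n-2)$; $H_P=au^{n+1}YZ+bv^{m+1}XZ-XY$ if $p\mid(m+1)$ and $p\mid(n+1)$; $H_P=a^4u^{4n-2}X^2+b^4v^{4m-2}Y^2+Z^2-2a^2b^2u^{2n-1}v^{2m-1}XY-2a^2u^{2n-1}XZ-2b^2v^{2m-1}YZ$ if $p\mid(2m-1)$ and $p\mid(2n-1)$; $H_P=b^2v^{2m-1}YZ-a^2u^{2n-2}X^2+2au^{n-1}XZ-Z^2$ if $p\mid(2m-1)$ and $p\mid(n-1)$; $H_P=au^{n-1}XY+bv^{m+1}Z^2-YZ$ if $p\mid(m+1)$ and $p\mid(n-1)$; $H_P=au^{n-1}XZ+bv^{m-2}Y^2-Z^2$ if $p\mid(m-2)$ and $p\mid(n-1)$; $H_P=au^{n-2}X^2+bv^{m-1}YZ-Z^2$ if $p\mid(m-1)$ and $p\mid(n-2)$; $H_P=a^2u^{2n-1}XZ-b^2v^{2m-2}Y^2+2bv^{m-1}YZ-Z^2$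 if $p\mid(m-1)$ and $p\mid(2n-1)$; $H_P=bv^{m-1}XY+au^{n+1}Z^2-XZ$ if $p\mid(m-1)$ and $p\mid(n+1)$.
   Context: For a point $P$ of a plane curve $\mathcal{F}$, the osculating conic at $P$ is the unique conic $\mathcal{C}$ maximizing the intersection multiplicity $I(P,\mathcal{F}\cap\mathcal{C})$. Classicality w.r.t. lines/conics: with $\varphi_j$ the monomials of degree $s\in\{1,2\}$ in $x,y,1$, $\tau$ separating and $D^{(k)}_\tau$ Hasse derivatives, the order sequence is the lexicographically smallest $\varepsilon_0<\dots<\varepsilon_M$ ($M=\binom{s+2}{2}-1$) with $\det(D^{(\varepsilon_i)}_\tau\varphi_j)\ne0$, and the curve is classical if $\varepsilon_i=i$ for all $i$, nonclassical otherwise. *)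

theory Defs
  imports "HOL-Computational_Algebra.Computational_Algebra" "HOL-Combinatorics.Combinatorics" "HOL-Library.Extended_Nat"
begin

(* Conics: homogeneous quadratic forms in X,Y,Z, given by their coefficient tuple
   (c_XX, c_YY, c_ZZ, c_XY, c_XZ, c_YZ).  A conic is a nonzero tuple, up to scalars. *)
type_synonym 'a conic = "'a \<times> 'a \<times> 'a \<times> 'a \<times> 'a \<times> 'a"

definition conic_eval :: "'a::comm_ring_1 conic \<Rightarrow> 'a \<Rightarrow> 'a \<Rightarrow> 'a \<Rightarrow> 'a" where
  "conic_eval c X Y Z = (case c of (cxx, cyy, czz, cxy, cxz, cyz) \<Rightarrow>
      cxx * X^2 + cyy * Y^2 + czz * Z^2 + cxy * X * Y + cxz * X * Z + cyz * Y * Z)"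

definition conic_eval_fps :: "'a::comm_ring_1 conic \<Rightarrow> 'a fps \<Rightarrow> 'a fps \<Rightarrow> 'a fps \<Rightarrow> 'a fps" where
  "conic_eval_fps c X Y Z = (case c of (cxx, cyy, czz, cxy, cxz, cyz) \<Rightarrow>
      fps_const cxx * X^2 + fps_const cyy * Y^2 + fps_const czz * Z^2 + fps_const cxy * X * Y
      + fps_const cxz * X * Z + fps_const cyz * Y * Z)"

definition conic_smult :: "'a::comm_ring_1 \<Rightarrow> 'a conic \<Rightarrow> 'a conic" where
  "conic_smult k c = (case c of (cxx, cyy, czz, cxy, cxz, cyz) \<Rightarrow>
      (k*cxx, k*cyy, k*czz, k*cxy, k*cxz, k*cyz))"

definition is_conic :: "'a::comm_ring_1 conic \<Rightarrow> bool" where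
  "is_conic c \<longleftrightarrow> c \<noteq> (0,0,0,0,0,0)"

definition lin_prod :: "'a::comm_ring_1 \<times> 'a \<times> 'a \<Rightarrow> 'a \<times> 'a \<times> 'a \<Rightarrow> 'a conic" where
  "lin_prod l1 l2 = (case l1 of (\<alpha>1, \<beta>1, \<gamma>1) \<Rightarrow> case l2 of (\<alpha>2, \<beta>2, \<gamma>2) \<Rightarrow>
      (\<alpha>1*\<alpha>2, \<beta>1*\<beta>2, \<gamma>1*\<gamma>2, \<alpha>1*\<beta>2 + \<beta>1*\<alpha>2, \<alpha>1*\<gamma>2 + \<gamma>1*\<alpha>2, \<beta>1*\<gamma>2 + \<gamma>1*\<beta>2))"

(* irreducible conic (over the algebraically closed ground field): not a product of two linear forms *)
definition irreducible_conic :: "'a::comm_ring_1 conic \<Rightarrow> bool" where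
  "irreducible_conic c \<longleftrightarrow> is_conic c \<and> \<not> (\<exists>l1 l2. c = lin_prod l1 l2)"

(* Affine points of F: a x^n + b y^m = 1 (the points (u:v:1) of the projective closure) *)
definition on_curve :: "'a::field \<Rightarrow> 'a \<Rightarrow> nat \<Rightarrow> nat \<Rightarrow> 'a \<Rightarrow> 'a \<Rightarrow> bool" where
  "on_curve a b n m u v \<longleftrightarrow> a * u^n + b * v^m = 1"

(* The branch of F centred at the affine point (u,v) with v \<noteq> 0 (a nonsingular point where
   t = x - u is a local parameter): x = u + t, y = Y(t) with Y(0) = v. *)
definition branch_y :: "'a::field \<Rightarrow> 'a \<Rightarrow> nat \<Rightarrow> nat \<Rightarrow> 'a \<Rightarrow> 'a \<Rightarrow> 'a fps" where
  "branch_y a b n m u v = (THE Y. fps_nth Y 0 = v \<and>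
      fps_const a * (fps_const u + fps_X)^n + fps_const b * Y^m = 1)"

definition branch_x :: "'a::field \<Rightarrow> 'a fps" where
  "branch_x u = fps_const u + fps_X"

(* Intersection multiplicity I(P, F \<inter> C) at P = (u:v:1), computed on the branch centred at P
   (the order in t of C(x(t), y(t), 1)); infinity if C vanishes on the branch. *)
definition int_mult :: "'a::field \<Rightarrow> 'a \<Rightarrow> nat \<Rightarrow> nat \<Rightarrow> 'a \<Rightarrow> 'a \<Rightarrow> 'a conic \<Rightarrow> enat" where
  "int_mult a b n m u v c = (let G = conic_eval_fps c (branch_x u) (branch_y a b n m u v) 1 in
      if G = 0 then \<infinity> else enat (subdegree G))"

definition osculating_conic :: "'a::field \<Rightarrow> 'a \<Rightarrow> nat \<Rightarrow> nat \<Rightarrow> 'a \<Rightarrow> 'a \<Rightarrow> 'a conic \<Rightarrow> bool" where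
  "osculating_conic a b n m u v c \<longleftrightarrow> is_conic c \<and>
     (\<forall>d. is_conic d \<longrightarrow> int_mult a b n m u v d \<le> int_mult a b n m u v c) \<and>
     (\<forall>d. is_conic d \<longrightarrow> int_mult a b n m u v d = int_mult a b n m u v c \<longrightarrow>
          (\<exists>k. d = conic_smult k c))"

definition hasse :: "nat \<Rightarrow> 'a::comm_ring_1 fps \<Rightarrow> 'a fps" where
  "hasse k f = Abs_fps (\<lambda>j. of_nat ((j + k) choose k) * fps_nth f (j + k))"

definition det_nat :: "nat \<Rightarrow> (nat \<Rightarrow> nat \<Rightarrow> 'a::comm_ring_1) \<Rightarrow> 'a" where
  "det_nat N M = (\<Sum>\<sigma> | \<sigma> permutes {..<N}. of_int (sign \<sigma>) * (\<Prod>i<N. M i (\<sigma> i)))"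

definition monomials :: "nat \<Rightarrow> 'b::comm_ring_1 \<Rightarrow> 'b \<Rightarrow> 'b list" where
  "monomials s x y = (if s = 1 then [1, x, y] else [1, x, y, x^2, x*y, y^2])"

(* F is classical w.r.t. the linear system of curves of degree s (order sequence 0,1,...,M):
   the Wronskian det(D^(i) phi_j)_{0 \<le> i,j \<le> M} is nonzero in the function field, tested through
   the embedding of the function field into K((t)) given by the branch at a nonsingular point
   (separating variable tau = x, which corresponds to t = x - u). *)
definition classical_wrt :: "nat \<Rightarrow> 'a::field \<Rightarrow> 'a \<Rightarrow> nat \<Rightarrow> nat \<Rightarrow> bool" where
  "classical_wrt s a b n m \<longleftrightarrow>
     (\<forall>u v. on_curve a b n m u v \<and> v \<noteq> 0 \<longrightarrow>
        (let phi = monomials s (branch_x u) (branch_y a b n m u v); M = length phi - 1 in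
          det_nat (M + 1) (\<lambda>i j. hasse i (phi ! j)) \<noteq> 0))"

end

theory Submission
  imports Defs
begin

definition ord5 :: "'a::comm_ring_1 fps \<Rightarrow> bool" where
  "ord5 f \<longleftrightarrow> (\<forall>i<5. f$i = 0)"

lemma ord5_0[simp]: "ord5 0" by (simp add: ord5_def)
lemma ord5_add: "ord5 f \<Longrightarrow> ord5 g \<Longrightarrow> ord5 (f + g)" by (simp add: ord5_def)
lemma ord5_diff: "ord5 f \<Longrightarrow> ord5 g \<Longrightarrow> ord5 (f - g)" by (simp add: ord5_def)
lemma ord5_uminus: "ord5 f \<Longrightarrow> ord5 (- f)" by (simp add: ord5_def)
lemma ord5_multL: "ord5 f \<Longrightarrow> ord5 (g * f)"
  by (auto simp add: ord5_def fps_mult_nth intro!: sum.neutral)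
lemma ord5_multR: "ord5 f \<Longrightarrow> ord5 (f * g)"
  using ord5_multL[of f g] by (simp add: mult.commute)

lemma frob:
  fixes f :: "'a::comm_ring_1 fps"
  assumes "CHAR('a) = p" "prime p" "p > 5" "p dvd N"
  shows "ord5 (f^N - fps_const ((f$0)^N))"
proof -
  obtain k where N: "N = p * k" using assms(4) by blast
  define g where "g = f^k"
  define h where "h = g - fps_const (g$0)"
  have h0: "h$0 = 0" by (simp add: h_def)
  have pc: "prime CHAR('a fps)" using assms by simp
  have "g^p = fps_const (g$0) ^ p + h^p"
    using freshmans_dream[OF pc, of p "fps_const (g$0)" h] assms unfolding h_def by simp
  moreover have "h = fps_shift 1 h * fps_X"
  proof (cases "h = 0")
    case False
    then have "1 \<le> subdegree h" using h0 by (simp add: Suc_le_eq subdegree_pos_iff)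
    then show ?thesis by (simp add: fps_shift_times_fps_X del: One_nat_def)
  qed simp
  ultimately have "g^p - fps_const (g$0) ^ p = (fps_shift 1 h)^p * fps_X^p"
    by (metis add_diff_cancel_left' power_mult_distrib)
  moreover have "f^N = g^p" by (simp add: N g_def power_mult mult.commute)
  moreover have "(f$0)^N = (g$0)^p" by (simp add: N g_def fps_power_zeroth power_mult mult.commute)
  ultimately have "f^N - fps_const ((f$0)^N) = (fps_shift 1 h)^p * fps_X^p" by simp
  then show ?thesis using assms(3) by (simp add: ord5_def fps_X_power_mult_right_nth)
qed

lemma mult_nth1: "(f*g)$1 = f$0*g$1 + f$1*(g$0::'a::comm_ring_1)"
  by (simp add: fps_mult_nth)
lemma mult_nth2: "(f*g)$2 = f$0*g$2 + f$1*g$1 + f$2*(g$0::'a::comm_ring_1)"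
  by (simp add: fps_mult_nth numeral_2_eq_2)
lemma mult_nth3: "(f*g)$3 = f$0*g$3 + f$1*g$2 + f$2*g$1 + f$3*(g$0::'a::comm_ring_1)"
  by (simp add: fps_mult_nth numeral_3_eq_3 numeral_2_eq_2 add.assoc)
lemma mult_nth4: "(f*g)$4 = f$0*g$4 + f$1*g$3 + f$2*g$2 + f$3*g$1 + f$4*(g$0::'a::comm_ring_1)"
  by (simp add: fps_mult_nth eval_nat_numeral sum.atLeast0_atMost_Suc add.assoc)

lemma pw1: "f$0 * (f^k)$1 = of_nat k * (f$0)^k * (f$1::'a::comm_ring_1)"
proof (induction k)
  case (Suc k)
  have "f$0 * (f^Suc k)$1 = f$0 * (f$0 * (f^k)$1) + f$0 * f$1 * (f$0)^k"
    by (simp add: mult_nth1 fps_power_zeroth algebra_simps)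
  also have "\<dots> = of_nat (Suc k) * (f$0)^Suc k * f$1"
    using Suc by (simp add: algebra_simps)
  finally show ?case .
qed simp

lemma pw2: "(f$0)^2 * (f^k)$2 = of_nat k * (f$0)^(k+1) * f$2 + of_nat (k choose 2) * (f$0)^k * (f$1::'a::comm_ring_1)^2"
proof (induction k)
  case (Suc k)
  have "(f$0)^2 * (f^Suc k)$2 = f$0 * ((f$0)^2 * (f^k)$2) + f$0 * f$1 * (f$0 * (f^k)$1) + (f$0)^2 * f$2 * (f$0)^k"
    by (simp add: mult_nth2 fps_power_zeroth algebra_simps power2_eq_square)
  also have "\<dots> = f$0 * (of_nat k * (f$0)^(k+1) * f$2 + of_nat (k choose 2) * (f$0)^k * (f$1)^2)
       + f$0 * f$1 * (of_nat k * (f$0)^k * f$1) + (f$0)^2 * f$2 * (f$0)^k"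
    using Suc pw1[of f k] by simp
  also have "\<dots> = of_nat (Suc k) * (f$0)^(Suc k+1) * f$2 + of_nat (Suc k choose 2) * (f$0)^Suc k * (f$1)^2"
  proof -
    have "Suc k choose 2 = k + (k choose 2)"
      using binomial_Suc_Suc[of k 1] by (simp add: numeral_2_eq_2)
    then show ?thesis by (simp add: algebra_simps power2_eq_square)
  qed
  finally show ?case .
qed (simp add: binomial_eq_0)

lemma branch_ex1:
  fixes a b u v :: "'a::field"
  assumes m: "of_nat m \<noteq> (0::'a)" and v: "v \<noteq> 0" and b: "b \<noteq> 0" and on: "a*u^n + b*v^m = 1"
  shows "\<exists>!Y. Y$0 = v \<and> fps_const a * (fps_const u + fps_X)^n + fps_const b * Y^m = 1"
proof
  define P where "P = (fps_const v + fps_X)^m - fps_const (v^m)"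
  have P0: "P$0 = 0" by (simp add: P_def fps_power_zeroth)
  have "v * P$1 = of_nat m * v^m"
    using pw1[of "fps_const v + fps_X" m] by (simp add: P_def)
  then have P1: "P$1 \<noteq> 0" using m v by auto
  define Q where "Q = fps_inv P"
  have Q0: "Q$0 = 0" by (simp add: Q_def fps_inv_def)
  define h where "h = fps_const (inverse b) * (1 - fps_const a * (fps_const u + fps_X)^n) - fps_const (v^m)"
  have h0: "h$0 = 0"
  proof -
    have "h$0 = inverse b * (1 - a * u^n) - v^m" by (simp add: h_def fps_power_zeroth)
    also have "\<dots> = 0" using on b by (simp add: field_simps)
    finally show ?thesis .
  qed
  have Pc: "P oo g = (fps_const v + g)^m - fps_const (v^m)" if g0: "g$0 = 0" for g
  proof -
    have "(fps_const v + fps_X) oo g = fps_const v + g"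
      using g0 by (simp add: fps_compose_add_distrib)
    then have "(fps_const v + fps_X)^m oo g = (fps_const v + g)^m"
      using fps_compose_power[OF g0, of "fps_const v + fps_X" m] by simp
    then show ?thesis by (simp add: P_def fps_compose_sub_distrib)
  qed
  define Y where "Y = fps_const v + (Q oo h)"
  have g0: "(Q oo h)$0 = 0" using Q0 by simp
  have "P oo (Q oo h) = h"
    using fps_compose_assoc[OF h0 Q0, of P] fps_inv_right[OF P0 P1] h0 by (simp add: Q_def)
  then have "Y^m - fps_const (v^m) = h" using Pc[OF g0] by (simp add: Y_def)
  then have Ym: "Y^m = fps_const (inverse b) * (1 - fps_const a * (fps_const u + fps_X)^n)"
    by (simp add: h_def)
  have "fps_const b * fps_const (inverse b) = (1 :: 'a fps)" using b by (simp flip: fps_const_mult)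
  then have "fps_const a * (fps_const u + fps_X)^n + fps_const b * Y^m = 1"
    unfolding Ym by (simp add: algebra_simps flip: mult.assoc)
  moreover have "Y$0 = v" by (simp add: Y_def Q0)
  ultimately show "Y$0 = v \<and> fps_const a * (fps_const u + fps_X)^n + fps_const b * Y^m = 1" by simp
  fix Z assume Z: "Z$0 = v \<and> fps_const a * (fps_const u + fps_X)^n + fps_const b * Z^m = 1"
  show "Z = Y"
  proof -
    have "fps_const b * Z^m = fps_const b * Y^m"
      using Z \<open>fps_const a * (fps_const u + fps_X)^n + fps_const b * Y^m = 1\<close>
      by (metis add_left_cancel)
    then have ZY: "Z^m = Y^m" using b by simp
    define S where "S = (\<Sum>i<m. Y^(m - Suc i) * Z^i)"
    have "Z^m - Y^m = (Z - Y) * S" unfolding S_def by (rule power_diff_sumr2)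
    moreover have "S$0 = of_nat m * v^(m-1)"
    proof -
      have "S$0 = (\<Sum>i<m. v^(m - Suc i) * v^i)"
        using Z \<open>Y$0 = v\<close> by (simp add: S_def fps_sum_nth fps_mult_nth fps_power_zeroth)
      also have "\<dots> = (\<Sum>i<m. v^(m-1))"
        by (intro sum.cong refl) (simp flip: power_add)
      finally show ?thesis by simp
    qed
    then have "S \<noteq> 0" using m v by (metis fps_zero_nth mult_eq_0_iff power_not_zero)
    ultimately show ?thesis using ZY by simp
  qed
qed

lemma conic_w_form:
  fixes Y :: "'a::comm_ring_1 fps" and v :: 'a
  defines "w \<equiv> Y - fps_const v"
  shows "conic_eval_fps (e1,e2,e3,e4,e5,e6) (fps_const u + fps_X) Y 1 =
    fps_const (e1*u^2 + e2*v^2 + e3 + e4*u*v + e5*u + e6*v) + fps_const (2*u*e1 + v*e4 + e5) * fps_X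
    + fps_const (2*v*e2 + u*e4 + e6) * w + fps_const e1 * fps_X^2 + fps_const e4 * (fps_X * w)
    + fps_const e2 * w^2"
proof -
  have Y: "Y = fps_const v + w" by (simp add: w_def)
  show ?thesis unfolding conic_eval_fps_def Y
    by (simp del: fps_const_add fps_const_mult fps_const_neg fps_const_sub
        add: fps_const_add[symmetric] fps_const_mult[symmetric] fps_const_neg[symmetric]
         fps_const_sub[symmetric] fps_numeral_fps_const[symmetric] algebra_simps power2_eq_square)
qed

lemma kernel_zero:
  fixes Y :: "'a::field fps"
  assumes y2: "Y$2 \<noteq> 0"
    and o: "ord5 (conic_eval_fps (e1,e2,e3,e4,e5,e6) (fps_const u + fps_X) Y 1)"
    and b2: "2*(Y$0)*e2 + u*e4 + e6 = 0"
  shows "e1 = 0 \<and> e2 = 0 \<and> e3 = 0 \<and> e4 = 0 \<and> e5 = 0 \<and> e6 = 0"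
proof -
  define v where "v = Y$0"
  define w where "w = Y - fps_const v"
  define B0 where "B0 = e1*u^2 + e2*v^2 + e3 + e4*u*v + e5*u + e6*v"
  define B1 where "B1 = 2*u*e1 + v*e4 + e5"
  have G: "conic_eval_fps (e1,e2,e3,e4,e5,e6) (fps_const u + fps_X) Y 1 =
    fps_const B0 + fps_const B1 * fps_X + fps_const 0 * w + fps_const e1 * fps_X^2
    + fps_const e4 * (fps_X * w) + fps_const e2 * w^2"
    using conic_w_form[of e1 e2 e3 e4 e5 e6 u Y v] b2 unfolding B0_def B1_def w_def v_def by simp
  have w0: "w$0 = 0" by (simp add: w_def v_def)
  have wS: "w$(Suc j) = Y$(Suc j)" for j by (simp add: w_def)
  have w1: "w$1 = Y$1" and w2: "w$2 = Y$2" and w3: "w$3 = Y$3" and w4: "w$4 = Y$4"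
    using wS[of 0] wS[of 1] wS[of 2] wS[of 3] by (simp_all add: numeral_eq_Suc)
  define y1 where "y1 = Y$1"
  define y2 where "y2 = Y$2"
  define y3 where "y3 = Y$3"
  define y4 where "y4 = Y$4"
  have c: "(conic_eval_fps (e1,e2,e3,e4,e5,e6) (fps_const u + fps_X) Y 1)$j = 0" if "j < 5" for j
    using o that by (simp add: ord5_def)
  have c0: "B0 = 0" using c[of 0] unfolding G by (simp add: w0 power2_eq_square)
  have c1: "B1 = 0" using c[of 1] unfolding G by (simp add: w0 power2_eq_square mult_nth1)
  have c2: "e1 + e4 * y1 + e2 * y1^2 = 0" using c[of 2] unfolding G
    by (simp add: wS w0 w1 power2_eq_square mult_nth2 y1_def fps_X_power_nth)
  have c3: "e4 * y2 + e2 * (2*y1*y2) = 0" using c[of 3] unfolding G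
    by (simp add: wS w0 w1 w2 power2_eq_square mult_nth3 y1_def y2_def fps_X_power_nth algebra_simps)
  have c4: "e4 * y3 + e2 * (2*y1*y3 + y2^2) = 0" using c[of 4] unfolding G
    by (simp add: wS w0 w1 w2 w3 power2_eq_square mult_nth4 y1_def y2_def y3_def fps_X_power_nth algebra_simps)
  have y2': "y2 \<noteq> 0" using y2 by (simp add: y2_def)
  have "(e4 + 2 * e2 * y1) * y2 = 0" using c3 by (simp add: algebra_simps)
  then have "e4 + 2 * e2 * y1 = 0" using y2' by simp
  then have e4: "e4 = - 2 * e2 * y1" by (simp add: add_eq_0_iff)
  have "e2 * y2^2 = 0" using c4 unfolding e4 by (simp add: algebra_simps)
  then have E2: "e2 = 0" using y2' by simp
  then have E4: "e4 = 0" using e4 by simp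
  have E1: "e1 = 0" using c2 E2 E4 by simp
  have E5: "e5 = 0" using c1 E1 E4 by (simp add: B1_def)
  have E6: "e6 = 0" using b2 E2 E4 by simp
  have E3: "e3 = 0" using c0 E1 E2 E4 E5 E6 by (simp add: B0_def)
  show ?thesis using E1 E2 E3 E4 E5 E6 by simp
qed

lemmas fc_simps = fps_const_add[symmetric] fps_const_mult[symmetric] fps_const_neg[symmetric]
         fps_const_sub[symmetric] fps_numeral_fps_const[symmetric]

lemma kernel_prop:
  fixes Y :: "'a::field fps"
  assumes y2: "Y$2 \<noteq> 0"
    and oc: "ord5 (conic_eval_fps c (fps_const u + fps_X) Y 1)"
    and od: "ord5 (conic_eval_fps d (fps_const u + fps_X) Y 1)"
    and cn: "is_conic c"
  shows "\<exists>k. d = conic_smult k c"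
proof -
  obtain c1 c2 c3 c4 c5 c6 where c: "c = (c1,c2,c3,c4,c5,c6)" by (cases c) auto
  obtain d1 d2 d3 d4 d5 d6 where d: "d = (d1,d2,d3,d4,d5,d6)" by (cases d) auto
  define bc where "bc = 2*(Y$0)*c2 + u*c4 + c6"
  define bd where "bd = 2*(Y$0)*d2 + u*d4 + d6"
  have bc: "bc \<noteq> 0"
  proof
    assume "bc = 0"
    then have "c1 = 0 \<and> c2 = 0 \<and> c3 = 0 \<and> c4 = 0 \<and> c5 = 0 \<and> c6 = 0"
      using kernel_zero[OF y2, of c1 c2 c3 c4 c5 c6 u] oc unfolding c bc_def by simp
    then show False using cn c by (simp add: is_conic_def)
  qed
  define k where "k = bd / bc"
  have "conic_eval_fps (d1 - k*c1, d2 - k*c2, d3 - k*c3, d4 - k*c4, d5 - k*c5, d6 - k*c6) (fps_const u + fps_X) Y 1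
     = conic_eval_fps d (fps_const u + fps_X) Y 1 - fps_const k * conic_eval_fps c (fps_const u + fps_X) Y 1"
    unfolding c d conic_eval_fps_def
    by (simp del: fps_const_add fps_const_mult fps_const_neg fps_const_sub
        add: fc_simps algebra_simps)
  then have "ord5 (conic_eval_fps (d1 - k*c1, d2 - k*c2, d3 - k*c3, d4 - k*c4, d5 - k*c5, d6 - k*c6) (fps_const u + fps_X) Y 1)"
    using ord5_diff[OF od ord5_multL[OF oc]] by simp
  moreover have "2*(Y$0)*(d2 - k*c2) + u*(d4 - k*c4) + (d6 - k*c6) = 0"
  proof -
    have "2*(Y$0)*(d2 - k*c2) + u*(d4 - k*c4) + (d6 - k*c6) = bd - k * bc"
      by (simp add: bc_def bd_def algebra_simps)
    also have "\<dots> = 0" using bc by (simp add: k_def)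
    finally show ?thesis .
  qed
  ultimately have "d1 - k*c1 = 0 \<and> d2 - k*c2 = 0 \<and> d3 - k*c3 = 0 \<and> d4 - k*c4 = 0 \<and> d5 - k*c5 = 0 \<and> d6 - k*c6 = 0"
    using kernel_zero[OF y2] by blast
  then have "d = conic_smult k c" unfolding c d conic_smult_def by simp
  then show ?thesis by blast
qed

lemma G_smult: "conic_eval_fps (conic_smult k c) x y z = fps_const k * conic_eval_fps c x y z"
  by (cases c) (simp del: fps_const_add fps_const_mult fps_const_neg fps_const_sub
        add: fc_simps algebra_simps conic_smult_def conic_eval_fps_def)

lemma int_mult_smult:
  fixes a b u v k :: "'a::field"
  assumes "k \<noteq> 0"
  shows "int_mult a b n m u v (conic_smult k c) = int_mult a b n m u v c"
  using assms by (simp add: int_mult_def Let_def G_smult)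

lemma int_mult_ge:
  assumes "ord5 (conic_eval_fps c (branch_x u) (branch_y a b n m u v) 1)"
  shows "int_mult a b n m u v c \<ge> 5"
proof -
  let ?G = "conic_eval_fps c (branch_x u) (branch_y a b n m u v) 1"
  show ?thesis
  proof (cases "?G = 0")
    case False
    then have "subdegree ?G \<ge> 5" using assms by (intro subdegree_geI) (auto simp: ord5_def)
    then show ?thesis using False by (simp add: int_mult_def Let_def)
  qed (simp add: int_mult_def)
qed

lemma int_mult_lt:
  assumes "\<not> ord5 (conic_eval_fps c (branch_x u) (branch_y a b n m u v) 1)"
  shows "int_mult a b n m u v c < 5"
proof -
  let ?G = "conic_eval_fps c (branch_x u) (branch_y a b n m u v) 1"
  obtain i where i: "i < 5" "?G $ i \<noteq> 0" using assms by (auto simp: ord5_def)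
  then have "?G \<noteq> 0" by auto
  moreover have "subdegree ?G \<le> i" using i by (intro subdegree_leI) 
  ultimately show ?thesis using i by (simp add: int_mult_def Let_def numeral_eq_enat)
qed

lemma oscul_general:
  fixes a b u v :: "'a::field"
  assumes y2: "(branch_y a b n m u v)$2 \<noteq> 0" and cn: "is_conic H"
    and oH: "ord5 (conic_eval_fps H (branch_x u) (branch_y a b n m u v) 1)"
  shows "osculating_conic a b n m u v H"
proof -
  have kp: "\<exists>k. k \<noteq> 0 \<and> d = conic_smult k H"
    if "is_conic d" "ord5 (conic_eval_fps d (branch_x u) (branch_y a b n m u v) 1)" for d
  proof -
    have o1: "ord5 (conic_eval_fps H (fps_const u + fps_X) (branch_y a b n m u v) 1)"
      using oH by (simp only: branch_x_def)
    have o2: "ord5 (conic_eval_fps d (fps_const u + fps_X) (branch_y a b n m u v) 1)"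
      using that(2) by (simp only: branch_x_def)
    have "\<exists>k. d = conic_smult k H"
      by (rule kernel_prop[OF y2 o1 o2 cn])
    then obtain k where k: "d = conic_smult k H" by blast
    have "k \<noteq> 0"
    proof
      assume "k = 0"
      then have "d = (0,0,0,0,0,0)" using k by (cases H) (simp add: conic_smult_def)
      with that(1) show False by (simp add: is_conic_def)
    qed
    then show ?thesis using k by blast
  qed
  have geH: "int_mult a b n m u v H \<ge> 5" by (rule int_mult_ge[OF oH])
  have A: "int_mult a b n m u v d \<le> int_mult a b n m u v H" if dc: "is_conic d" for d
  proof (cases "ord5 (conic_eval_fps d (branch_x u) (branch_y a b n m u v) 1)")
    case True
    obtain k where "k \<noteq> 0" "d = conic_smult k H" using kp[OF dc True] by blast
    then show ?thesis by (simp add: int_mult_smult)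
  next
    case False
    show ?thesis by (rule order.trans[OF less_imp_le[OF int_mult_lt[OF False]] geH])
  qed
  have B: "\<exists>k. d = conic_smult k H" if "is_conic d" "int_mult a b n m u v d = int_mult a b n m u v H" for d
  proof -
    have "ord5 (conic_eval_fps d (branch_x u) (branch_y a b n m u v) 1)"
    proof (rule ccontr)
      assume "\<not> ?thesis"
      from int_mult_lt[OF this] geH that(2) show False by auto
    qed
    then show ?thesis using kp[OF that(1)] by blast
  qed
  show ?thesis unfolding osculating_conic_def using cn A B by simp
qed

definition disc :: "'a::comm_ring_1 conic \<Rightarrow> 'a" where
  "disc c = (case c of (a,b,c,d,e,f) \<Rightarrow> 4*a*b*c + d*e*f - a*f^2 - b*e^2 - c*d^2)"

lemma disc_lin_prod: "disc (lin_prod l1 l2) = 0"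
  by (cases l1; cases l2) (simp add: disc_def lin_prod_def algebra_simps power2_eq_square)

lemma irred_general: "is_conic H \<Longrightarrow> disc H \<noteq> 0 \<Longrightarrow> irreducible_conic H"
  unfolding irreducible_conic_def using disc_lin_prod by metis

context fixes a b x y xn ym xk yk uk vk :: "'b::idom" begin

lemma id1: assumes "xn = x^2*xk" "ym = y^2*yk"
  shows "a*uk*x^2 + b*vk*y^2 - 1 = (a*xn + b*ym - 1) * 1 + (xk - uk) * (-a*x^2) + (yk - vk) * (-b*y^2)"
  using assms by algebra

lemma id2: assumes "xk = x*xn" "yk = y*ym"
  shows "-(x*y) + b*vk*x + a*uk*y = (a*xn + b*ym - 1) * (x*y) + (xk - uk) * (-a*y) + (yk - vk) * (-b*x)"
  using assms by algebra

lemma id3: assumes "xn^2 = x*xk" "ym^2 = y*yk"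
  defines "s \<equiv> a*xn" and "r \<equiv> b*ym"
  defines "F \<equiv> a*xn + b*ym - 1"
  defines "e1 \<equiv> a^2*x*(xk - uk)" and "e2 \<equiv> b^2*y*(yk - vk)"
  defines "D \<equiv> s^2 - r^2"
  shows "(a^2*uk)^2*x^2 + (b^2*vk)^2*y^2 + 1 - 2*(a^2*uk)*(b^2*vk)*x*y - 2*(a^2*uk)*x - 2*(b^2*vk)*y
    = F * ((s + r + 1) * (2*(s^2+r^2) - (s+r)^2 - 1)) + (xk - uk) * (a^2*x*(-2*D + e1 - e2 + 2))
      + (yk - vk) * (b^2*y*(2*D - e1 + e2 + 2))"
  using assms by algebra

lemma id4: assumes "xn = x*xk" "ym^2 = y*yk"
  defines "r \<equiv> b*ym"
  defines "F \<equiv> a*xn + b*ym - 1"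
  defines "e1 \<equiv> a*x*(xk - uk)"
  shows "-((a*uk)^2)*x^2 - 1 + 2*(a*uk)*x + b^2*vk*y
    = F * (-F + 2*e1 + 2*r) + (xk - uk) * (a*x*(-e1 - 2*r)) + (yk - vk) * (- (b^2*y))"
  using assms by algebra

lemma id5: assumes "xn = x*xk" "yk = y*ym"
  shows "b*vk + a*uk*x*y - y = (a*xn + b*ym - 1) * y + (xk - uk) * (-a*x*y) + (yk - vk) * (-b)"
  using assms by algebra

lemma id6: assumes "xn = x*xk" "ym = y^2*yk"
  shows "b*vk*y^2 - 1 + a*uk*x = (a*xn + b*ym - 1) * 1 + (xk - uk) * (-a*x) + (yk - vk) * (-b*y^2)"
  using assms by algebra

lemma id7: assumes "xn = x^2*xk" "ym = y*yk"
  shows "a*uk*x^2 - 1 + b*vk*y = (a*xn + b*ym - 1) * 1 + (xk - uk) * (-a*x^2) + (yk - vk) * (-b*y)"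
  using assms by algebra

lemma id8: assumes "xn^2 = x*xk" "ym = y*yk"
  defines "s \<equiv> a*xn"
  defines "F \<equiv> a*xn + b*ym - 1"
  defines "e2 \<equiv> b*y*(yk - vk)"
  shows "-((b*vk)^2)*y^2 - 1 + a^2*uk*x + 2*(b*vk)*y
    = F * (-F + 2*e2 + 2*s) + (xk - uk) * (- (a^2*x)) + (yk - vk) * (b*y*(-e2 - 2*s))"
  using assms by algebra

lemma id9: assumes "xk = x*xn" "ym = y*yk"
  shows "a*uk + b*vk*x*y - x = (a*xn + b*ym - 1) * x + (xk - uk) * (-a) + (yk - vk) * (-b*x*y)"
  using assms by algebra

end

lemma choose2_of_nat: "2 * (of_nat (k choose 2) :: 'a::comm_ring_1) = of_nat k * (of_nat k - 1)"
proof (induction k)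
  case (Suc k)
  have "Suc k choose 2 = k + (k choose 2)"
    using binomial_Suc_Suc[of k 1] by (simp add: numeral_2_eq_2)
  then show ?case using Suc by (simp add: algebra_simps)
qed (simp add: binomial_eq_0)

lemma flex:
  fixes a b u v :: "'a::field" and Y :: "'a fps"
  assumes EQ: "fps_const a * (fps_const u + fps_X)^n + fps_const b * Y^m = 1" and Y0: "Y$0 = v"
    and y2: "Y$2 = 0" and n0: "of_nat n \<noteq> (0::'a)" and u: "u \<noteq> 0" and v: "v \<noteq> 0" and a: "a \<noteq> 0"
  shows "(of_nat n - 1) * of_nat m * (b*v^m) + (of_nat m - 1) * of_nat n * (a*u^n) = 0"
proof -
  define x where "x = fps_const u + fps_X"
  define N where "N = (of_nat n :: 'a)"
  define M where "M = (of_nat m :: 'a)"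
  define S where "S = a*u^n"
  define R where "R = b*v^m"
  define y1 where "y1 = Y$1"
  have c1: "a * (x^n)$1 + b * (Y^m)$1 = 0"
  proof -
    have "(fps_const a * x^n + fps_const b * Y^m)$1 = 0" using EQ by (simp add: x_def)
    then show ?thesis by simp
  qed
  have c2: "a * (x^n)$2 + b * (Y^m)$2 = 0"
  proof -
    have "(fps_const a * x^n + fps_const b * Y^m)$2 = 0" using EQ by (simp add: x_def)
    then show ?thesis by simp
  qed
  have p1x: "u * (x^n)$1 = N * u^n" using pw1[of x n] by (simp add: x_def N_def)
  have p2x: "u^2 * (x^n)$2 = of_nat (n choose 2) * u^n" using pw2[of x n] by (simp add: x_def)
  have p1y: "v * (Y^m)$1 = M * v^m * y1" using pw1[of Y m] by (simp add: Y0 M_def y1_def)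
  have p2y: "v^2 * (Y^m)$2 = of_nat (m choose 2) * v^m * y1^2" using pw2[of Y m] by (simp add: Y0 y2 y1_def)
  have E1: "N*S*v + M*R*u*y1 = 0"
  proof -
    have "a*v*(u * (x^n)$1) + b*u*(v * (Y^m)$1) = a*v*(N * u^n) + b*u*(M * v^m * y1)"
      by (simp only: p1x p1y)
    then have "N*S*v + M*R*u*y1 = a*v*(u * (x^n)$1) + b*u*(v * (Y^m)$1)"
      by (simp add: S_def R_def algebra_simps)
    also have "\<dots> = u*v*(a * (x^n)$1 + b * (Y^m)$1)" by (simp add: algebra_simps)
    finally show ?thesis using c1 by simp
  qed
  have E2: "N*(N-1)*S*v^2 + M*(M-1)*R*u^2*y1^2 = 0"
  proof -
    have "N*(N-1)*S*v^2 + M*(M-1)*R*u^2*y1^2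
        = a*v^2*(2*of_nat (n choose 2))*u^n + b*u^2*(2*of_nat (m choose 2))*v^m*y1^2"
      unfolding choose2_of_nat N_def M_def S_def R_def by (simp add: algebra_simps)
    also have "\<dots> = 2*a*v^2*(u^2 * (x^n)$2) + 2*b*u^2*(v^2 * (Y^m)$2)"
      unfolding p2x p2y by (simp add: algebra_simps)
    also have "\<dots> = 2*u^2*v^2*(a * (x^n)$2 + b * (Y^m)$2)" by (simp add: algebra_simps power2_eq_square)
    finally show ?thesis using c2 by simp
  qed
  have "N*S*v^2*((N-1)*M*R + (M-1)*N*S) = M*R*(N*(N-1)*S*v^2 + M*(M-1)*R*u^2*y1^2)
      - (M-1)*(M*R*u*y1 - N*S*v)*(N*S*v + M*R*u*y1)"
    by (simp add: algebra_simps power2_eq_square)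
  also have "\<dots> = 0" using E1 E2 by simp
  finally have "N*S*v^2*((N-1)*M*R + (M-1)*N*S) = 0" .
  moreover have "N*S*v^2 \<noteq> 0" using n0 u v a by (simp add: N_def S_def)
  ultimately have "(N-1)*M*R + (M-1)*N*S = 0" by simp
  then show ?thesis by (simp add: N_def M_def R_def S_def)
qed

lemma case_generic:
  fixes a b u v :: "'a::field"
  assumes y2: "(branch_y a b n m u v)$2 \<noteq> 0" and cn: "is_conic H" and dH: "disc H \<noteq> 0"
   and G: "conic_eval_fps H (branch_x u) (branch_y a b n m u v) 1 = F * K0 + Exx*K1 + Eyy*K2"
   and F: "F = 0" and oEx: "ord5 Exx" and oEy: "ord5 Eyy"
  shows "osculating_conic a b n m u v H \<and> irreducible_conic H"
proof
  have "ord5 (conic_eval_fps H (branch_x u) (branch_y a b n m u v) 1)"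
    unfolding G F using oEx oEy by (simp add: ord5_add ord5_multR)
  then show "osculating_conic a b n m u v H" by (rule oscul_general[OF y2 cn])
  show "irreducible_conic H" by (rule irred_general[OF cn dH])
qed

lemma fc1:
  fixes S R N M :: "'a::field"
  assumes "S + R = 1" "(N - 1) * M * R + (M - 1) * N * S = 0" "N = 2" "M = 2" "(2::'a) \<noteq> 0"
  shows False
proof -
  have "(N - 1) * M * R + (M - 1) * N * S = 2 * (S + R)" using assms(3,4) by (simp add: algebra_simps)
  then show False using assms by simp
qed

lemma fc2:
  fixes S R N M :: "'a::field"
  assumes "S + R = 1" "(N - 1) * M * R + (M - 1) * N * S = 0" "N = -1" "M = -1" "(2::'a) \<noteq> 0"
  shows False
proof -
  have "(N - 1) * M * R + (M - 1) * N * S = 2 * (S + R)" using assms(3,4) by (simp add: algebra_simps)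
  then show False using assms by simp
qed

lemma fc3:
  fixes S R N M :: "'a::field"
  assumes "S + R = 1" "(N - 1) * M * R + (M - 1) * N * S = 0" "2*N = 1" "2*M = 1"
  shows False
  using assms by algebra

lemma fc4:
  fixes S R N M :: "'a::field"
  assumes "S + R = 1" "(N - 1) * M * R + (M - 1) * N * S = 0" "N = 1" "2*M = 1" "S \<noteq> 0"
  shows False
  using assms by algebra

lemma fc5:
  fixes S R N M :: "'a::field"
  assumes "S + R = 1" "(N - 1) * M * R + (M - 1) * N * S = 0" "N = 1" "M = -1" "S \<noteq> 0" "(2::'a) \<noteq> 0"
  shows False
  using assms by algebra

lemma fc6:
  fixes S R N M :: "'a::field"
  assumes "S + R = 1" "(N - 1) * M * R + (M - 1) * N * S = 0" "N = 1" "M = 2" "S \<noteq> 0"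
  shows False
  using assms by algebra

lemma fc7:
  fixes S R N M :: "'a::field"
  assumes "S + R = 1" "(N - 1) * M * R + (M - 1) * N * S = 0" "N = 2" "M = 1" "R \<noteq> 0"
  shows False
  using assms by algebra

lemma fc8:
  fixes S R N M :: "'a::field"
  assumes "S + R = 1" "(N - 1) * M * R + (M - 1) * N * S = 0" "2*N = 1" "M = 1" "R \<noteq> 0"
  shows False
  using assms by algebra

lemma fc9:
  fixes S R N M :: "'a::field"
  assumes "S + R = 1" "(N - 1) * M * R + (M - 1) * N * S = 0" "N = -1" "M = 1" "R \<noteq> 0" "(2::'a) \<noteq> 0"
  shows False
  using assms by algebra

lemma disc3: "(A::'a::field) \<noteq> 0 \<Longrightarrow> B \<noteq> 0 \<Longrightarrow> (2::'a) \<noteq> 0 \<Longrightarrow> disc (A^2, B^2, 1, -2*A*B, -2*A, -2*B) \<noteq> 0"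
proof -
  assume h: "A \<noteq> 0" "B \<noteq> 0" "(2::'a) \<noteq> 0"
  have "disc (A^2, B^2, 1, -2*A*B, -2*A, -2*B) = -(2*2*2*2)*(A*A)*(B*B)"
    by (simp add: disc_def algebra_simps power2_eq_square)
  moreover have "(16::'a) \<noteq> 0"
  proof -
    have "(16::'a) = 2*(2*(2*2))" by simp
    then show ?thesis using h(3) by (metis mult_eq_0_iff)
  qed
  ultimately show ?thesis using h by simp
qed

lemma pow_split: "k \<le> n \<Longrightarrow> (z::'b::monoid_mult)^n = z^k * z^(n-k)"
  by (metis le_add_diff_inverse power_add)

lemma pow_sq: "1 \<le> n \<Longrightarrow> ((z::'b::comm_monoid_mult)^n)^2 = z * z^(2*n-1)"
  using pow_split[of 1 "2*n" z] by (simp add: power_mult mult.commute)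

theorem proposition3p6:
  fixes a b u v :: "'a::alg_closed_field"
    and p h q n m :: nat
  assumes "prime p" and "p > 5" and "h \<ge> 1" and "q = p ^ h"
    and "CHAR('a) = p"
    and "a \<noteq> 0" and "b \<noteq> 0" and "a ^ q = a" and "b ^ q = b"
    and "n \<ge> m" and "m > 2" and "\<not> p dvd (m * n)"
    and "classical_wrt 1 a b n m"
    and "\<not> classical_wrt 2 a b n m"
    and "on_curve a b n m u v" and "u \<noteq> 0" and "v \<noteq> 0"
  shows
   "(p dvd (m - 2) \<and> p dvd (n - 2) \<longrightarrow>
       (let H = (a*u^(n-2), b*v^(m-2), -1, 0, 0, 0) in
          osculating_conic a b n m u v H \<and> irreducible_conic H)) \<and>
    (p dvd (m + 1) \<and> p dvd (n + 1) \<longrightarrow>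
       (let H = (0, 0, 0, -1, b*v^(m+1), a*u^(n+1)) in
          osculating_conic a b n m u v H \<and> irreducible_conic H)) \<and>
    (p dvd (2*m - 1) \<and> p dvd (2*n - 1) \<longrightarrow>
       (let H = (a^4*u^(4*n-2), b^4*v^(4*m-2), 1, -2*a^2*b^2*u^(2*n-1)*v^(2*m-1),
                 -2*a^2*u^(2*n-1), -2*b^2*v^(2*m-1)) in
          osculating_conic a b n m u v H \<and> irreducible_conic H)) \<and>
    (p dvd (2*m - 1) \<and> p dvd (n - 1) \<longrightarrow>
       (let H = (-(a^2*u^(2*n-2)), 0, -1, 0, 2*a*u^(n-1), b^2*v^(2*m-1)) in
          osculating_conic a b n m u v H \<and> irreducible_conic H)) \<and>
    (p dvd (m + 1) \<and> p dvd (n - 1) \<longrightarrow>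
       (let H = (0, 0, b*v^(m+1), a*u^(n-1), 0, -1) in
          osculating_conic a b n m u v H \<and> irreducible_conic H)) \<and>
    (p dvd (m - 2) \<and> p dvd (n - 1) \<longrightarrow>
       (let H = (0, b*v^(m-2), -1, 0, a*u^(n-1), 0) in
          osculating_conic a b n m u v H \<and> irreducible_conic H)) \<and>
    (p dvd (m - 1) \<and> p dvd (n - 2) \<longrightarrow>
       (let H = (a*u^(n-2), 0, -1, 0, 0, b*v^(m-1)) in
          osculating_conic a b n m u v H \<and> irreducible_conic H)) \<and>
    (p dvd (m - 1) \<and> p dvd (2*n - 1) \<longrightarrow>
       (let H = (0, -(b^2*v^(2*m-2)), -1, 0, a^2*u^(2*n-1), 2*b*v^(m-1)) in
          osculating_conic a b n m u v H \<and> irreducible_conic H)) \<and>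
    (p dvd (m - 1) \<and> p dvd (n + 1) \<longrightarrow>
       (let H = (0, 0, a*u^(n+1), b*v^(m-1), -1, 0) in
          osculating_conic a b n m u v H \<and> irreducible_conic H))"
proof -
  note asm = assms
  define x where "x = fps_const u + fps_X"
  define Y where "Y = branch_y a b n m u v"
  have chr: "of_nat k = (0::'a) \<longleftrightarrow> p dvd k" for k
    using asm(5) of_nat_eq_0_iff_char_dvd by metis
  have pm: "of_nat m \<noteq> (0::'a)" using asm(12) chr by (metis dvd_mult2)
  have pn: "of_nat n \<noteq> (0::'a)" using asm(12) chr by (metis dvd_mult)
  have two: "(2::'a) \<noteq> 0"
  proof
    assume "(2::'a) = 0"
    then have "of_nat 2 = (0::'a)" by simp
    then have "p dvd 2" using chr by blast
    then show False using dvd_imp_le[of p 2] asm(2) by simp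
  qed
  have four: "(4::'a) \<noteq> 0" using two by (metis mult_eq_0_iff numeral_Bit0_eq_double)
  have on: "a*u^n + b*v^m = 1" using asm(15) by (simp add: on_curve_def)
  have ex1: "\<exists>!Y. Y$0 = v \<and> fps_const a * (fps_const u + fps_X)^n + fps_const b * Y^m = 1"
    by (rule branch_ex1[OF pm asm(17) asm(7) on])
  have Yp: "Y$0 = v \<and> fps_const a * x^n + fps_const b * Y^m = 1"
    using theI'[OF ex1] unfolding Y_def branch_y_def x_def .
  then have Y0: "Y$0 = v" and EQ: "fps_const a * x^n + fps_const b * Y^m = 1" by auto
  have EQ0: "fps_const a * x^n + fps_const b * Y^m - 1 = 0" using EQ by simp
  have bx: "branch_x u = x" by (simp add: branch_x_def x_def)
  have bY: "branch_y a b n m u v = Y" by (simp add: Y_def)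
  have x0: "x$0 = u" by (simp add: x_def)
  have fx: "ord5 (x^N - fps_const (u^N))" if "p dvd N" for N
    using frob[OF asm(5) asm(1) asm(2) that, of x] x0 by simp
  have fy: "ord5 (Y^N - fps_const (v^N))" if "p dvd N" for N
    using frob[OF asm(5) asm(1) asm(2) that, of Y] Y0 by simp
  have flexeq: "(of_nat n - 1) * of_nat m * (b*v^m) + (of_nat m - 1) * of_nat n * (a*u^n) = 0"
    if "Y$2 = 0"
    using flex[OF EQ[unfolded x_def] Y0 that pn asm(16) asm(17) asm(6)] .
  have S0: "a*u^n \<noteq> 0" using asm(6) asm(16) by simp
  have R0: "b*v^m \<noteq> 0" using asm(7) asm(17) by simp
  have r_m2: "(of_nat k::'a) = 2" if "p dvd (k - 2)" "k \<ge> 2" for k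
  proof -
    have "(of_nat (k-2)::'a) = 0" using that chr by blast
    then show ?thesis using that(2) by (simp add: of_nat_diff)
  qed
  have r_p1: "(of_nat k::'a) = -1" if "p dvd (k + 1)" for k
  proof -
    have "(of_nat (k+1)::'a) = 0" using that chr by blast
    then show ?thesis by (simp add: eq_neg_iff_add_eq_0 add.commute)
  qed
  have r_21: "2 * (of_nat k::'a) = 1" if "p dvd (2*k - 1)" "k \<ge> 1" for k
  proof -
    have "(of_nat (2*k-1)::'a) = 0" using that chr by blast
    then show ?thesis using that(2) by (simp add: of_nat_diff)
  qed
  have r_m1: "(of_nat k::'a) = 1" if "p dvd (k - 1)" "k \<ge> 1" for k
  proof -
    have "(of_nat (k-1)::'a) = 0" using that chr by blast
    then show ?thesis using that(2) by (simp add: of_nat_diff)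
  qed
  have mge: "m \<ge> 3" and nge: "n \<ge> 3" using asm(10) asm(11) by auto
  have powfacts: "u^(4*n-2) = (u^(2*n-1))^2" "v^(4*m-2) = (v^(2*m-1))^2"
     "u^(2*n-2) = (u^(n-1))^2" "v^(2*m-2) = (v^(m-1))^2" "a^4 = (a^2)^2" "b^4 = (b^2)^2"
  proof -
    have e1: "4*n-2 = (2*n-1)*2" "4*m-2 = (2*m-1)*2" "2*n-2 = (n-1)*2" "2*m-2 = (m-1)*2" using nge mge by auto
    show "u^(4*n-2) = (u^(2*n-1))^2" "v^(4*m-2) = (v^(2*m-1))^2"
     "u^(2*n-2) = (u^(n-1))^2" "v^(2*m-2) = (v^(m-1))^2" "a^4 = (a^2)^2" "b^4 = (b^2)^2"
      unfolding e1 by (simp_all flip: power_mult)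
  qed
  show ?thesis
    apply (intro conjI impI)
    subgoal premises h
    proof -
      have N: "(of_nat n::'a) = 2" using r_m2[of n] h nge by auto
      have M: "(of_nat m::'a) = 2" using r_m2[of m] h mge by auto
      have y2: "Y$2 \<noteq> 0"
      proof
        assume "Y$2 = 0"
        from fc1[OF on flexeq[OF this] N M two] show False .
      qed
      have hx: "x^n = x^2 * x^(n-2)" by (rule pow_split) (use nge in simp)
      have hy: "Y^m = Y^2 * Y^(m-2)" by (rule pow_split) (use mge in simp)
      have cn: "is_conic (a*u^(n-2), b*v^(m-2), -1, 0, 0, 0)" using asm(6,7,16,17) by (auto simp add: is_conic_def)
      have dH: "disc (a*u^(n-2), b*v^(m-2), -1, 0, 0, 0) \<noteq> 0"
        using two four asm(6,7,16,17) by (simp add: disc_def)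
      have fxk: "ord5 (x^(n-2) - fps_const (u^(n-2)))" by (rule fx) (use h in auto)
      have fyk: "ord5 (Y^(m-2) - fps_const (v^(m-2)))" by (rule fy) (use h in auto)
      note idk = id1[where a="fps_const a" and b="fps_const b" and x=x and y=Y and xn="x^n" and ym="Y^m"
        and xk="x^(n-2)" and yk="Y^(m-2)" and uk="fps_const (u^(n-2))" and vk="fps_const (v^(m-2))", OF hx hy]
      show ?thesis unfolding Let_def
        apply (rule case_generic[OF y2[unfolded Y_def] cn dH trans[OF _ idk] EQ0 fxk fyk])
        apply (simp del: fps_const_add fps_const_mult fps_const_neg fps_const_sub
             add: fc_simps bx bY conic_eval_fps_def power_mult_distrib)
        done
    qed
    subgoal premises h
    proof -
      have N: "(of_nat n::'a) = -1" using r_p1[of n] h by auto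
      have M: "(of_nat m::'a) = -1" using r_p1[of m] h by auto
      have y2: "Y$2 \<noteq> 0"
      proof
        assume "Y$2 = 0"
        from fc2[OF on flexeq[OF this] N M two] show False .
      qed
      have hx: "x^(n+1) = x * x^n" by simp
      have hy: "Y^(m+1) = Y * Y^m" by simp
      have cn: "is_conic (0, 0, 0, -1, b*v^(m+1), a*u^(n+1))" using asm(6,7,16,17) by (auto simp add: is_conic_def)
      have dH: "disc (0, 0, 0, -1, b*v^(m+1), a*u^(n+1)) \<noteq> 0"
        using two four asm(6,7,16,17) by (simp add: disc_def)
      have fxk: "ord5 (x^(n+1) - fps_const (u^(n+1)))" by (rule fx) (use h in auto)
      have fyk: "ord5 (Y^(m+1) - fps_const (v^(m+1)))" by (rule fy) (use h in auto)
      note idk = id2[where a="fps_const a" and b="fps_const b" and x=x and y=Y and xn="x^n" and ym="Y^m"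
        and xk="x^(n+1)" and yk="Y^(m+1)" and uk="fps_const (u^(n+1))" and vk="fps_const (v^(m+1))", OF hx hy]
      show ?thesis unfolding Let_def
        apply (rule case_generic[OF y2[unfolded Y_def] cn dH trans[OF _ idk] EQ0 fxk fyk])
        apply (simp del: fps_const_add fps_const_mult fps_const_neg fps_const_sub
             add: fc_simps bx bY conic_eval_fps_def power_mult_distrib)
        done
    qed
    subgoal premises h
    proof -
      have N: "2 * (of_nat n::'a) = 1" using r_21[of n] h nge by auto
      have M: "2 * (of_nat m::'a) = 1" using r_21[of m] h mge by auto
      have y2: "Y$2 \<noteq> 0"
      proof
        assume "Y$2 = 0"
        from fc3[OF on flexeq[OF this] N M] show False .
      qed
      have hx: "(x^n)^2 = x * x^(2*n-1)" by (rule pow_sq) (use nge in simp)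
      have hy: "(Y^m)^2 = Y * Y^(2*m-1)" by (rule pow_sq) (use mge in simp)
      have Hq: "(a^4*u^(4*n-2), b^4*v^(4*m-2), 1, -2*a^2*b^2*u^(2*n-1)*v^(2*m-1), -2*a^2*u^(2*n-1), -2*b^2*v^(2*m-1)) = ((a^2*u^(2*n-1))^2, (b^2*v^(2*m-1))^2, 1, -2*(a^2*u^(2*n-1))*(b^2*v^(2*m-1)), -2*(a^2*u^(2*n-1)), -2*(b^2*v^(2*m-1)))"
        using powfacts by (simp add: power_mult_distrib flip: power_mult)
      have cn: "is_conic ((a^2*u^(2*n-1))^2, (b^2*v^(2*m-1))^2, 1, -2*(a^2*u^(2*n-1))*(b^2*v^(2*m-1)), -2*(a^2*u^(2*n-1)), -2*(b^2*v^(2*m-1)))" using asm(6,7,16,17) by (auto simp add: is_conic_def)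
      have dH: "disc ((a^2*u^(2*n-1))^2, (b^2*v^(2*m-1))^2, 1, -2*(a^2*u^(2*n-1))*(b^2*v^(2*m-1)), -2*(a^2*u^(2*n-1)), -2*(b^2*v^(2*m-1))) \<noteq> 0"
        by (rule disc3) (use two asm(6,7,16,17) in simp_all)
      have fxk: "ord5 (x^(2*n-1) - fps_const (u^(2*n-1)))" by (rule fx) (use h in auto)
      have fyk: "ord5 (Y^(2*m-1) - fps_const (v^(2*m-1)))" by (rule fy) (use h in auto)
      note idk = id3[where a="fps_const a" and b="fps_const b" and x=x and y=Y and xn="x^n" and ym="Y^m"
        and xk="x^(2*n-1)" and yk="Y^(2*m-1)" and uk="fps_const (u^(2*n-1))" and vk="fps_const (v^(2*m-1))", OF hx hy]
      show ?thesis unfolding Let_def Hq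
        apply (rule case_generic[OF y2[unfolded Y_def] cn dH trans[OF _ idk] EQ0 fxk fyk])
        apply (simp del: fps_const_add fps_const_mult fps_const_neg fps_const_sub
             add: fc_simps bx bY conic_eval_fps_def power_mult_distrib)
        done
    qed
    subgoal premises h
    proof -
      have N: "(of_nat n::'a) = 1" using r_m1[of n] h nge by auto
      have M: "2 * (of_nat m::'a) = 1" using r_21[of m] h mge by auto
      have y2: "Y$2 \<noteq> 0"
      proof
        assume "Y$2 = 0"
        from fc4[OF on flexeq[OF this] N M S0] show False .
      qed
      have hx: "x^n = x * x^(n-1)" using pow_split[of 1 n x] nge by simp
      have hy: "(Y^m)^2 = Y * Y^(2*m-1)" by (rule pow_sq) (use mge in simp)
      have Hq: "(-(a^2*u^(2*n-2)), 0, -1, 0, 2*a*u^(n-1), b^2*v^(2*m-1)) = (-((a*u^(n-1))^2), 0, -1, 0, 2*(a*u^(n-1)), b^2*v^(2*m-1))"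
        using powfacts by (simp add: power_mult_distrib flip: power_mult)
      have cn: "is_conic (-((a*u^(n-1))^2), 0, -1, 0, 2*(a*u^(n-1)), b^2*v^(2*m-1))" using asm(6,7,16,17) by (auto simp add: is_conic_def)
      have dH: "disc (-((a*u^(n-1))^2), 0, -1, 0, 2*(a*u^(n-1)), b^2*v^(2*m-1)) \<noteq> 0"
        using two four asm(6,7,16,17) by (simp add: disc_def)
      have fxk: "ord5 (x^(n-1) - fps_const (u^(n-1)))" by (rule fx) (use h in auto)
      have fyk: "ord5 (Y^(2*m-1) - fps_const (v^(2*m-1)))" by (rule fy) (use h in auto)
      note idk = id4[where a="fps_const a" and b="fps_const b" and x=x and y=Y and xn="x^n" and ym="Y^m"
        and xk="x^(n-1)" and yk="Y^(2*m-1)" and uk="fps_const (u^(n-1))" and vk="fps_const (v^(2*m-1))", OF hx hy]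
      show ?thesis unfolding Let_def Hq
        apply (rule case_generic[OF y2[unfolded Y_def] cn dH trans[OF _ idk] EQ0 fxk fyk])
        apply (simp del: fps_const_add fps_const_mult fps_const_neg fps_const_sub
             add: fc_simps bx bY conic_eval_fps_def power_mult_distrib)
        done
    qed
    subgoal premises h
    proof -
      have N: "(of_nat n::'a) = 1" using r_m1[of n] h nge by auto
      have M: "(of_nat m::'a) = -1" using r_p1[of m] h by auto
      have y2: "Y$2 \<noteq> 0"
      proof
        assume "Y$2 = 0"
        from fc5[OF on flexeq[OF this] N M S0 two] show False .
      qed
      have hx: "x^n = x * x^(n-1)" using pow_split[of 1 n x] nge by simp
      have hy: "Y^(m+1) = Y * Y^m" by simp
      have cn: "is_conic (0, 0, b*v^(m+1), a*u^(n-1), 0, -1)" using asm(6,7,16,17) by (auto simp add: is_conic_def)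
      have dH: "disc (0, 0, b*v^(m+1), a*u^(n-1), 0, -1) \<noteq> 0"
        using two four asm(6,7,16,17) by (simp add: disc_def)
      have fxk: "ord5 (x^(n-1) - fps_const (u^(n-1)))" by (rule fx) (use h in auto)
      have fyk: "ord5 (Y^(m+1) - fps_const (v^(m+1)))" by (rule fy) (use h in auto)
      note idk = id5[where a="fps_const a" and b="fps_const b" and x=x and y=Y and xn="x^n" and ym="Y^m"
        and xk="x^(n-1)" and yk="Y^(m+1)" and uk="fps_const (u^(n-1))" and vk="fps_const (v^(m+1))", OF hx hy]
      show ?thesis unfolding Let_def
        apply (rule case_generic[OF y2[unfolded Y_def] cn dH trans[OF _ idk] EQ0 fxk fyk])
        apply (simp del: fps_const_add fps_const_mult fps_const_neg fps_const_sub
             add: fc_simps bx bY conic_eval_fps_def power_mult_distrib)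
        done
    qed
    subgoal premises h
    proof -
      have N: "(of_nat n::'a) = 1" using r_m1[of n] h nge by auto
      have M: "(of_nat m::'a) = 2" using r_m2[of m] h mge by auto
      have y2: "Y$2 \<noteq> 0"
      proof
        assume "Y$2 = 0"
        from fc6[OF on flexeq[OF this] N M S0] show False .
      qed
      have hx: "x^n = x * x^(n-1)" using pow_split[of 1 n x] nge by simp
      have hy: "Y^m = Y^2 * Y^(m-2)" by (rule pow_split) (use mge in simp)
      have cn: "is_conic (0, b*v^(m-2), -1, 0, a*u^(n-1), 0)" using asm(6,7,16,17) by (auto simp add: is_conic_def)
      have dH: "disc (0, b*v^(m-2), -1, 0, a*u^(n-1), 0) \<noteq> 0"
        using two four asm(6,7,16,17) by (simp add: disc_def)
      have fxk: "ord5 (x^(n-1) - fps_const (u^(n-1)))" by (rule fx) (use h in auto)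
      have fyk: "ord5 (Y^(m-2) - fps_const (v^(m-2)))" by (rule fy) (use h in auto)
      note idk = id6[where a="fps_const a" and b="fps_const b" and x=x and y=Y and xn="x^n" and ym="Y^m"
        and xk="x^(n-1)" and yk="Y^(m-2)" and uk="fps_const (u^(n-1))" and vk="fps_const (v^(m-2))", OF hx hy]
      show ?thesis unfolding Let_def
        apply (rule case_generic[OF y2[unfolded Y_def] cn dH trans[OF _ idk] EQ0 fxk fyk])
        apply (simp del: fps_const_add fps_const_mult fps_const_neg fps_const_sub
             add: fc_simps bx bY conic_eval_fps_def power_mult_distrib)
        done
    qed
    subgoal premises h
    proof -
      have N: "(of_nat n::'a) = 2" using r_m2[of n] h nge by auto
      have M: "(of_nat m::'a) = 1" using r_m1[of m] h mge by auto
      have y2: "Y$2 \<noteq> 0"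
      proof
        assume "Y$2 = 0"
        from fc7[OF on flexeq[OF this] N M R0] show False .
      qed
      have hx: "x^n = x^2 * x^(n-2)" by (rule pow_split) (use nge in simp)
      have hy: "Y^m = Y * Y^(m-1)" using pow_split[of 1 m Y] mge by simp
      have cn: "is_conic (a*u^(n-2), 0, -1, 0, 0, b*v^(m-1))" using asm(6,7,16,17) by (auto simp add: is_conic_def)
      have dH: "disc (a*u^(n-2), 0, -1, 0, 0, b*v^(m-1)) \<noteq> 0"
        using two four asm(6,7,16,17) by (simp add: disc_def)
      have fxk: "ord5 (x^(n-2) - fps_const (u^(n-2)))" by (rule fx) (use h in auto)
      have fyk: "ord5 (Y^(m-1) - fps_const (v^(m-1)))" by (rule fy) (use h in auto)
      note idk = id7[where a="fps_const a" and b="fps_const b" and x=x and y=Y and xn="x^n" and ym="Y^m"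
        and xk="x^(n-2)" and yk="Y^(m-1)" and uk="fps_const (u^(n-2))" and vk="fps_const (v^(m-1))", OF hx hy]
      show ?thesis unfolding Let_def
        apply (rule case_generic[OF y2[unfolded Y_def] cn dH trans[OF _ idk] EQ0 fxk fyk])
        apply (simp del: fps_const_add fps_const_mult fps_const_neg fps_const_sub
             add: fc_simps bx bY conic_eval_fps_def power_mult_distrib)
        done
    qed
    subgoal premises h
    proof -
      have N: "2 * (of_nat n::'a) = 1" using r_21[of n] h nge by auto
      have M: "(of_nat m::'a) = 1" using r_m1[of m] h mge by auto
      have y2: "Y$2 \<noteq> 0"
      proof
        assume "Y$2 = 0"
        from fc8[OF on flexeq[OF this] N M R0] show False .
      qed
      have hx: "(x^n)^2 = x * x^(2*n-1)" by (rule pow_sq) (use nge in simp)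
      have hy: "Y^m = Y * Y^(m-1)" using pow_split[of 1 m Y] mge by simp
      have Hq: "(0, -(b^2*v^(2*m-2)), -1, 0, a^2*u^(2*n-1), 2*b*v^(m-1)) = (0, -((b*v^(m-1))^2), -1, 0, a^2*u^(2*n-1), 2*(b*v^(m-1)))"
        using powfacts by (simp add: power_mult_distrib flip: power_mult)
      have cn: "is_conic (0, -((b*v^(m-1))^2), -1, 0, a^2*u^(2*n-1), 2*(b*v^(m-1)))" using asm(6,7,16,17) by (auto simp add: is_conic_def)
      have dH: "disc (0, -((b*v^(m-1))^2), -1, 0, a^2*u^(2*n-1), 2*(b*v^(m-1))) \<noteq> 0"
        using two four asm(6,7,16,17) by (simp add: disc_def)
      have fxk: "ord5 (x^(2*n-1) - fps_const (u^(2*n-1)))" by (rule fx) (use h in auto)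
      have fyk: "ord5 (Y^(m-1) - fps_const (v^(m-1)))" by (rule fy) (use h in auto)
      note idk = id8[where a="fps_const a" and b="fps_const b" and x=x and y=Y and xn="x^n" and ym="Y^m"
        and xk="x^(2*n-1)" and yk="Y^(m-1)" and uk="fps_const (u^(2*n-1))" and vk="fps_const (v^(m-1))", OF hx hy]
      show ?thesis unfolding Let_def Hq
        apply (rule case_generic[OF y2[unfolded Y_def] cn dH trans[OF _ idk] EQ0 fxk fyk])
        apply (simp del: fps_const_add fps_const_mult fps_const_neg fps_const_sub
             add: fc_simps bx bY conic_eval_fps_def power_mult_distrib)
        done
    qed
    subgoal premises h
    proof -
      have N: "(of_nat n::'a) = -1" using r_p1[of n] h by auto
      have M: "(of_nat m::'a) = 1" using r_m1[of m] h mge by auto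
      have y2: "Y$2 \<noteq> 0"
      proof
        assume "Y$2 = 0"
        from fc9[OF on flexeq[OF this] N M R0 two] show False .
      qed
      have hx: "x^(n+1) = x * x^n" by simp
      have hy: "Y^m = Y * Y^(m-1)" using pow_split[of 1 m Y] mge by simp
      have cn: "is_conic (0, 0, a*u^(n+1), b*v^(m-1), -1, 0)" using asm(6,7,16,17) by (auto simp add: is_conic_def)
      have dH: "disc (0, 0, a*u^(n+1), b*v^(m-1), -1, 0) \<noteq> 0"
        using two four asm(6,7,16,17) by (simp add: disc_def)
      have fxk: "ord5 (x^(n+1) - fps_const (u^(n+1)))" by (rule fx) (use h in auto)
      have fyk: "ord5 (Y^(m-1) - fps_const (v^(m-1)))" by (rule fy) (use h in auto)
      note idk = id9[where a="fps_const a" and b="fps_const b" and x=x and y=Y and xn="x^n" and ym="Y^m"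
        and xk="x^(n+1)" and yk="Y^(m-1)" and uk="fps_const (u^(n+1))" and vk="fps_const (v^(m-1))", OF hx hy]
      show ?thesis unfolding Let_def
        apply (rule case_generic[OF y2[unfolded Y_def] cn dH trans[OF _ idk] EQ0 fxk fyk])
        apply (simp del: fps_const_add fps_const_mult fps_const_neg fps_const_sub
             add: fc_simps bx bY conic_eval_fps_def power_mult_distrib)
        done
    qed
    done
qed

end
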